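(* For every composition $\lambda=(\lambda_1,\dots,\lambda_\ell)$ of $n$ and every tuple of integers $\mathbf{k}=(k_1,\dots,k_\ell)$, the weighted permutation module $M(\lambda,\mathbf{k})$ has a one-dimensional space of $S_n$-invariants.
   Context: Let $T\subset GL_n(\mathbb{C})$ be the diagonal torus, $S_n$ the subgroup of permutation matrices, and $T\rtimes S_n\cong\mathbb{C}^\times\wr S_n$ the monomial matrices. For a partition $\lambda$ of $r$ and integer $k$, $S^{\lambda,k}$ is the representation of $\mathbb{C}^\times\wr S_r$ on the Specht module $S^\lambda$ with each copy of $\mathbb{C}^\times$ acting by $z\mapsto z^k$. The weighted permutation module is $$M(\lambda,\mathbf{k}):=\mathrm{Ind}_{(\mathbb{C}^\times\wr S_{\lambda_1})\times\dots\times(\mathbb{C}^\times\wr S_{\lambda_\ell})}^{\mathbb{C}^\times\wr S_n}\left(S^{(\lambda_1),k_1}\otimes\dots\otimes S^{(\lambda_\ell),k_\ell}\right),$$ the product subgroup being block diagonal. *)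

theory Defs
  imports "HOL-Analysis.Analysis" "HOL-Library.Function_Algebras"
begin

text \<open>n x n complex matrices are modelled as functions nat => nat => complex,
  with all entries outside the range 0..n-1 equal to zero.\<close>

definition monomial_mat :: "nat \<Rightarrow> (nat \<Rightarrow> nat \<Rightarrow> complex) \<Rightarrow> bool" where
  "monomial_mat n A \<longleftrightarrow>
     (\<forall>i j. (n \<le> i \<or> n \<le> j) \<longrightarrow> A i j = 0) \<and>
     (\<forall>i<n. \<exists>!j. j < n \<and> A i j \<noteq> 0) \<and>
     (\<forall>j<n. \<exists>!i. i < n \<and> A i j \<noteq> 0)"

definition perm_mat :: "nat \<Rightarrow> (nat \<Rightarrow> nat \<Rightarrow> complex) \<Rightarrow> bool" where
  "perm_mat n A \<longleftrightarrow> monomial_mat n A \<and> (\<forall>i j. A i j \<noteq> 0 \<longrightarrow> A i j = 1)"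

definition mat_mult :: "nat \<Rightarrow> (nat \<Rightarrow> nat \<Rightarrow> complex) \<Rightarrow> (nat \<Rightarrow> nat \<Rightarrow> complex)
    \<Rightarrow> (nat \<Rightarrow> nat \<Rightarrow> complex)" where
  "mat_mult n A B = (\<lambda>i j. \<Sum>l<n. A i l * B l j)"

definition blk :: "nat list \<Rightarrow> nat \<Rightarrow> nat" where
  "blk lam i = (LEAST b. i < sum_list (take (Suc b) lam))"

text \<open>The block-diagonal subgroup (C^x wr S_lam1) x ... x (C^x wr S_lam_l).\<close>
definition block_mat :: "nat list \<Rightarrow> (nat \<Rightarrow> nat \<Rightarrow> complex) \<Rightarrow> bool" where
  "block_mat lam A \<longleftrightarrow> monomial_mat (sum_list lam) A \<and>
     (\<forall>i j. A i j \<noteq> 0 \<longrightarrow> blk lam i = blk lam j)"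

text \<open>The one-dimensional character S^{(lam1),k1} x ... x S^{(lam_l),k_l} of the
  block subgroup: the trivial Specht module S^{(r)} with each torus coordinate of
  block b acting by z ^ k_b.\<close>
definition wchar :: "nat list \<Rightarrow> int list \<Rightarrow> (nat \<Rightarrow> nat \<Rightarrow> complex) \<Rightarrow> complex" where
  "wchar lam k A = (\<Prod>i<sum_list lam. \<Prod>j<sum_list lam.
      if A i j \<noteq> 0 then A i j powi (k ! blk lam j) else 1)"

text \<open>Weighted permutation module M(lam,k), realised as the induced representation:
  functions f on the monomial group with f(h g) = chi(h) f(g) for h in the block
  subgroup; the group acts by right translation (g.f)(x) = f(x g).\<close>
definition wperm_module :: "nat list \<Rightarrow> int list \<Rightarrow> ((nat \<Rightarrow> nat \<Rightarrow> complex) \<Rightarrow> complex) set" where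
  "wperm_module lam k = {f.
     (\<forall>A. \<not> monomial_mat (sum_list lam) A \<longrightarrow> f A = 0) \<and>
     (\<forall>h g. block_mat lam h \<and> monomial_mat (sum_list lam) g \<longrightarrow>
        f (mat_mult (sum_list lam) h g) = wchar lam k h * f g)}"

definition Sn_invariants :: "nat list \<Rightarrow> int list \<Rightarrow> ((nat \<Rightarrow> nat \<Rightarrow> complex) \<Rightarrow> complex) set" where
  "Sn_invariants lam k = {f \<in> wperm_module lam k.
     \<forall>P x. perm_mat (sum_list lam) P \<and> monomial_mat (sum_list lam) x \<longrightarrow>
        f (mat_mult (sum_list lam) x P) = f x}"

definition fscale :: "complex \<Rightarrow> ('a \<Rightarrow> complex) \<Rightarrow> ('a \<Rightarrow> complex)" where
  "fscale c f = (\<lambda>x. c * f x)"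

end

theory Submission
  imports Defs
begin

definition mstr :: "nat \<Rightarrow> (nat \<Rightarrow> nat \<Rightarrow> complex) \<Rightarrow> (nat \<Rightarrow> nat) \<Rightarrow> bool" where
  "mstr n A s \<longleftrightarrow> bij_betw s {..<n} {..<n} \<and> (\<forall>i j. A i j \<noteq> 0 \<longleftrightarrow> i < n \<and> j = s i)"

lemma mono_iff: "monomial_mat n A \<longleftrightarrow> (\<exists>s. mstr n A s)"
proof
  assume M: "monomial_mat n A"
  have Z: "\<And>i j. n \<le> i \<or> n \<le> j \<Longrightarrow> A i j = 0" using M unfolding monomial_mat_def by blast
  have R: "\<And>i. i < n \<Longrightarrow> \<exists>!j. j < n \<and> A i j \<noteq> 0" using M unfolding monomial_mat_def by blast
  have C: "\<And>j. j < n \<Longrightarrow> \<exists>!i. i < n \<and> A i j \<noteq> 0" using M unfolding monomial_mat_def by blast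
  define s where "s i = (THE j. j < n \<and> A i j \<noteq> 0)" for i
  have s1: "s i < n \<and> A i (s i) \<noteq> 0" if "i < n" for i
    unfolding s_def by (rule theI'[OF R[OF that]])
  have s2: "A i j \<noteq> 0 \<longleftrightarrow> i < n \<and> j = s i" for i j
  proof
    assume a: "A i j \<noteq> 0"
    have "i < n" "j < n" using Z a by (meson not_le)+
    with R[OF \<open>i < n\<close>] s1[OF \<open>i < n\<close>] a show "i < n \<and> j = s i" by blast
  qed (use s1 in auto)
  have inj: "inj_on s {..<n}"
  proof (rule inj_onI)
    fix x y assume "x \<in> {..<n}" "y \<in> {..<n}" "s x = s y"
    then have "x < n" "y < n" by auto
    with C[of "s x"] s1[of x] s1[of y] \<open>s x = s y\<close> show "x = y" by auto
  qed
  have "s ` {..<n} = {..<n}"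
    by (rule endo_inj_surj) (use s1 inj in auto)
  then have "bij_betw s {..<n} {..<n}" using inj by (simp add: bij_betw_def)
  then show "\<exists>s. mstr n A s" using s2 unfolding mstr_def by blast
next
  assume "\<exists>s. mstr n A s"
  then obtain s where b: "bij_betw s {..<n} {..<n}" and e: "\<forall>i j. A i j \<noteq> 0 \<longleftrightarrow> i < n \<and> j = s i"
    unfolding mstr_def by blast
  have sl: "i < n \<Longrightarrow> s i < n" for i using b by (meson bij_betwE lessThan_iff)
  have c1: "\<forall>i j. (n \<le> i \<or> n \<le> j) \<longrightarrow> A i j = 0" proof (intro allI impI)
    fix i j assume "n \<le> i \<or> n \<le> j"
    show "A i j = 0" proof (rule ccontr)
      assume "A i j \<noteq> 0"
      then have "i < n" "j = s i" using e by auto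
      then show False using sl[of i] \<open>n \<le> i \<or> n \<le> j\<close> by auto
    qed
  qed
  have c2: "\<forall>i<n. \<exists>!j. j < n \<and> A i j \<noteq> 0"
  proof (intro allI impI)
    fix i assume "i < n"
    show "\<exists>!j. j < n \<and> A i j \<noteq> 0"
    proof (rule ex1I[of _ "s i"])
      show "s i < n \<and> A i (s i) \<noteq> 0" using e sl \<open>i < n\<close> by simp
    next
      fix j assume "j < n \<and> A i j \<noteq> 0" then show "j = s i" using e by simp
    qed
  qed
  have c3: "\<forall>j<n. \<exists>!i. i < n \<and> A i j \<noteq> 0"
  proof (intro allI impI)
    fix j assume "j < n"
    then have "j \<in> s ` {..<n}" using b by (simp add: bij_betw_def)
    then obtain i where i: "i < n" "s i = j" by auto
    have u: "\<And>i'. i' < n \<Longrightarrow> s i' = j \<Longrightarrow> i' = i"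
      using b i unfolding bij_betw_def inj_on_def by auto
    show "\<exists>!i. i < n \<and> A i j \<noteq> 0"
    proof (rule ex1I[of _ i])
      show "i < n \<and> A i j \<noteq> 0" using e i by auto
    next
      fix i' assume "i' < n \<and> A i' j \<noteq> 0" then show "i' = i" using e u by auto
    qed
  qed
  show "monomial_mat n A" unfolding monomial_mat_def using c1 c2 c3 by (intro conjI)
qed

lemma mstr_lt: "mstr n A s \<Longrightarrow> i < n \<Longrightarrow> s i < n"
  unfolding mstr_def by (meson bij_betwE lessThan_iff)

lemma mstr_nz: "mstr n A s \<Longrightarrow> i < n \<Longrightarrow> A i (s i) \<noteq> 0"
  unfolding mstr_def by blast

lemma prod_collapse:
  assumes "mstr n A s"
  shows "(\<Prod>i<n. \<Prod>j<n. if A i j \<noteq> 0 then F i j (A i j) else 1) = (\<Prod>i<n. F i (s i) (A i (s i)))"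
proof (rule prod.cong[OF refl])
  fix i assume i: "i \<in> {..<n}"
  have "(\<Prod>j<n. if A i j \<noteq> 0 then F i j (A i j) else 1) = (\<Prod>j<n. if j = s i then F i j (A i j) else 1)"
    using assms i unfolding mstr_def by (intro prod.cong) auto
  also have "\<dots> = F i (s i) (A i (s i))"
    using mstr_lt[OF assms] i by (simp add: prod.delta)
  finally show "(\<Prod>j<n. if A i j \<noteq> 0 then F i j (A i j) else 1) = F i (s i) (A i (s i))" .
qed

lemma mm:
  assumes "mstr n A s"
  shows "mat_mult n A B i j = (if i < n then A i (s i) * B (s i) j else 0)"
proof (cases "i < n")
  case True
  have "mat_mult n A B i j = (\<Sum>l<n. if l = s i then A i l * B l j else 0)"
    unfolding mat_mult_def using assms unfolding mstr_def by (intro sum.cong) auto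
  also have "\<dots> = A i (s i) * B (s i) j" using mstr_lt[OF assms True] by (simp add: sum.delta)
  finally show ?thesis using True by simp
next
  case False
  have "mat_mult n A B i j = 0" unfolding mat_mult_def
    by (rule sum.neutral) (use assms False in \<open>auto simp: mstr_def\<close>)
  then show ?thesis using False by simp
qed

lemma mstr_mult:
  assumes "mstr n A s" "mstr n B t"
  shows "mstr n (mat_mult n A B) (t \<circ> s)"
proof -
  have "bij_betw (t \<circ> s) {..<n} {..<n}" using assms unfolding mstr_def by (metis bij_betw_trans)
  moreover have "mat_mult n A B i j \<noteq> 0 \<longleftrightarrow> i < n \<and> j = (t \<circ> s) i" for i j
    using mm[OF assms(1)] mstr_nz[OF assms(1)] mstr_lt[OF assms(1)] assms(2) unfolding mstr_def by auto
  ultimately show ?thesis unfolding mstr_def by blast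
qed

definition f0 :: "nat list \<Rightarrow> int list \<Rightarrow> (nat \<Rightarrow> nat \<Rightarrow> complex) \<Rightarrow> complex" where
  "f0 lam k A = (if monomial_mat (sum_list lam) A then
     (\<Prod>i<sum_list lam. \<Prod>j<sum_list lam. if A i j \<noteq> 0 then A i j powi (k ! blk lam i) else 1) else 0)"

lemma f0_eq: "mstr (sum_list lam) A s \<Longrightarrow> f0 lam k A = (\<Prod>i<sum_list lam. A i (s i) powi (k ! blk lam i))"
  unfolding f0_def using mono_iff prod_collapse[of "sum_list lam" A s "\<lambda>i j a. a powi (k ! blk lam i)"]
  by auto

lemma wchar_eq:
  assumes "mstr (sum_list lam) A s" "block_mat lam A"
  shows "wchar lam k A = (\<Prod>i<sum_list lam. A i (s i) powi (k ! blk lam i))"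
proof -
  have "wchar lam k A = (\<Prod>i<sum_list lam. A i (s i) powi (k ! blk lam (s i)))"
    unfolding wchar_def using prod_collapse[OF assms(1), of "\<lambda>i j a. a powi (k ! blk lam j)"] by simp
  also have "\<dots> = (\<Prod>i<sum_list lam. A i (s i) powi (k ! blk lam i))"
  proof (rule prod.cong[OF refl])
    fix i assume "i \<in> {..<sum_list lam}"
    then have "A i (s i) \<noteq> 0" using mstr_nz[OF assms(1)] by simp
    then have "blk lam i = blk lam (s i)" using assms(2) unfolding block_mat_def by blast
    then show "A i (s i) powi (k ! blk lam (s i)) = A i (s i) powi (k ! blk lam i)" by simp
  qed
  finally show ?thesis .
qed

lemma f0_block:
  assumes h: "block_mat lam h" and g: "monomial_mat (sum_list lam) g"
  shows "f0 lam k (mat_mult (sum_list lam) h g) = wchar lam k h * f0 lam k g"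
proof -
  let ?n = "sum_list lam"
  obtain s where s: "mstr ?n h s" using h mono_iff unfolding block_mat_def by blast
  obtain t where t: "mstr ?n g t" using g mono_iff by blast
  have bs: "blk lam (s i) = blk lam i" if "i < ?n" for i
    using h mstr_nz[OF s that] unfolding block_mat_def by metis
  have "f0 lam k (mat_mult ?n h g) = (\<Prod>i<?n. mat_mult ?n h g i ((t \<circ> s) i) powi (k ! blk lam i))"
    by (rule f0_eq[OF mstr_mult[OF s t]])
  also have "\<dots> = (\<Prod>i<?n. h i (s i) powi (k ! blk lam i) * g (s i) (t (s i)) powi (k ! blk lam (s i)))"
    by (intro prod.cong) (auto simp: mm[OF s] power_int_mult_distrib bs)
  also have "\<dots> = (\<Prod>i<?n. h i (s i) powi (k ! blk lam i)) * (\<Prod>i<?n. g (s i) (t (s i)) powi (k ! blk lam (s i)))"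
    by (simp add: prod.distrib)
  also have "(\<Prod>i<?n. g (s i) (t (s i)) powi (k ! blk lam (s i))) = (\<Prod>i<?n. g i (t i) powi (k ! blk lam i))"
    using prod.reindex_bij_betw[of s "{..<?n}" "{..<?n}" "\<lambda>i. g i (t i) powi (k ! blk lam i)"] s
    unfolding mstr_def by simp
  finally show ?thesis using wchar_eq[OF s h] f0_eq[OF t] by simp
qed

lemma f0_perm:
  assumes P: "perm_mat (sum_list lam) P" and x: "monomial_mat (sum_list lam) x"
  shows "f0 lam k (mat_mult (sum_list lam) x P) = f0 lam k x"
proof -
  let ?n = "sum_list lam"
  obtain s where s: "mstr ?n x s" using x mono_iff by blast
  obtain t where t: "mstr ?n P t" using P mono_iff unfolding perm_mat_def by blast
  have P1: "i < ?n \<Longrightarrow> P i (t i) = 1" for i using mstr_nz[OF t] P unfolding perm_mat_def by blast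
  have "f0 lam k (mat_mult ?n x P) = (\<Prod>i<?n. mat_mult ?n x P i ((t \<circ> s) i) powi (k ! blk lam i))"
    by (rule f0_eq[OF mstr_mult[OF s t]])
  also have "\<dots> = (\<Prod>i<?n. x i (s i) powi (k ! blk lam i))"
    by (intro prod.cong) (auto simp: mm[OF s] P1 mstr_lt[OF s])
  finally show ?thesis using f0_eq[OF s] by simp
qed

lemma vs: "vector_space fscale"
  by unfold_locales (auto simp: fscale_def fun_eq_iff algebra_simps)

lemma f0_in: "fscale c (f0 lam k) \<in> Sn_invariants lam k"
  unfolding Sn_invariants_def wperm_module_def fscale_def
  using f0_block f0_perm by (auto simp: f0_def)

lemma f0_I: "f0 lam k (\<lambda>i j. if i < sum_list lam \<and> j = i then 1 else 0) = 1"
proof -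
  have "mstr (sum_list lam) (\<lambda>i j. if i < sum_list lam \<and> j = i then 1 else 0) id"
    unfolding mstr_def by auto
  from f0_eq[OF this] show ?thesis by simp
qed

lemma inv_f0:
  assumes f: "f \<in> Sn_invariants lam k"
  shows "f = fscale (f (\<lambda>i j. if i < sum_list lam \<and> j = i then 1 else 0)) (f0 lam k)"
proof
  fix x
  let ?n = "sum_list lam"
  let ?I = "\<lambda>i j. if i < ?n \<and> j = i then (1::complex) else 0"
  show "f x = fscale (f ?I) (f0 lam k) x"
  proof (cases "monomial_mat ?n x")
    case False
    then show ?thesis using f unfolding Sn_invariants_def wperm_module_def fscale_def f0_def by auto
  next
    case True
    then obtain s where s: "mstr ?n x s" using mono_iff by blast
    define D where "D = (\<lambda>i j. if i < ?n \<and> j = i then x i (s i) else 0)"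
    define P where "P = (\<lambda>i j. if i < ?n \<and> j = s i then (1::complex) else 0)"
    have Ds: "mstr ?n D id" unfolding mstr_def D_def using mstr_nz[OF s] by auto
    have Ps: "mstr ?n P s" using s unfolding mstr_def P_def by auto
    have Is: "mstr ?n ?I id" unfolding mstr_def by auto
    have Db: "block_mat lam D" using Ds mono_iff unfolding block_mat_def D_def
      by (auto split: if_splits)
    have Pp: "perm_mat ?n P" using Ps mono_iff unfolding perm_mat_def P_def by auto
    have DP: "mat_mult ?n D P = x"
    proof (intro ext)
      fix i j
      have "mat_mult ?n D P i j = (if i < ?n then D i i * P i j else 0)" using mm[OF Ds] by simp
      also have "\<dots> = x i j" using s unfolding D_def P_def mstr_def by auto
      finally show "mat_mult ?n D P i j = x i j" .
    qed
    have DI: "mat_mult ?n D ?I = D"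
    proof (intro ext)
      fix i j
      have "mat_mult ?n D ?I i j = (if i < ?n then D i (id i) * ?I (id i) j else 0)" by (rule mm[OF Ds])
      also have "\<dots> = D i j" unfolding D_def id_def by (cases "i < ?n"; cases "j = i") auto
      finally show "mat_mult ?n D ?I i j = D i j" .
    qed
    have Dm: "monomial_mat ?n D" using Ds mono_iff by blast
    have Im: "monomial_mat ?n ?I" using Is mono_iff by blast
    have inv: "\<forall>P x. perm_mat ?n P \<and> monomial_mat ?n x \<longrightarrow> f (mat_mult ?n x P) = f x"
      using f unfolding Sn_invariants_def by blast
    have eqv: "\<forall>h g. block_mat lam h \<and> monomial_mat ?n g \<longrightarrow>
        f (mat_mult ?n h g) = wchar lam k h * f g"
      using f unfolding Sn_invariants_def wperm_module_def by blast
    have "f x = f (mat_mult ?n D P)" using DP by simp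
    also have "\<dots> = f D" using inv Pp Dm by blast
    also have "\<dots> = f (mat_mult ?n D ?I)" using DI by simp
    also have "\<dots> = wchar lam k D * f ?I"
      using eqv Db Im by blast
    also have "wchar lam k D = (\<Prod>i<?n. x i (s i) powi (k ! blk lam i))"
      using wchar_eq[OF Ds Db] unfolding D_def by simp
    also have "\<dots> = f0 lam k x" using f0_eq[OF s] by simp
    finally show ?thesis unfolding fscale_def by simp
  qed
qed

theorem lemma3p2:
  fixes lam :: "nat list" and k :: "int list" and n :: nat
  assumes "sum_list lam = n"
    and "\<forall>x\<in>set lam. 0 < x"
    and "length k = length lam"
  shows "vector_space.dim fscale (Sn_invariants lam k) = 1"
proof -
  interpret V: vector_space fscale by (rule vs)
  let ?S = "Sn_invariants lam k"
  have "?S \<subseteq> V.span {f0 lam k}"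
    using inv_f0 unfolding V.span_singleton by blast
  moreover have "{f0 lam k} \<subseteq> V.span ?S"
    using f0_in[of 1 lam k] V.span_base unfolding fscale_def by auto
  ultimately have "V.span ?S = V.span {f0 lam k}" using V.span_eq by blast
  then have "V.dim ?S = V.dim {f0 lam k}" by (metis V.dim_span)
  moreover have "f0 lam k \<noteq> 0"
  proof
    assume "f0 lam k = 0"
    then have "f0 lam k (\<lambda>i j. if i < sum_list lam \<and> j = i then 1 else 0) = 0" by simp
    with f0_I[of lam k] show False by simp
  qed
  then have "V.independent {f0 lam k}"
  proof (intro V.independent_insertI V.independent_empty)
    show "f0 lam k \<notin> V.span {}" using \<open>f0 lam k \<noteq> 0\<close> unfolding V.span_empty by simp
  qed
  ultimately show ?thesis using V.dim_eq_card_independent[of "{f0 lam k}"] by simp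
qed

end
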